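(* Let $n\ge2$, $\gamma\in\mathbb{R}$ and $n<p<+\infty$. There exists a constant $C>0$ such that, if $\omega\in C(\mathbb{R}^n_+\times\mathbb{R}^n_+,[0,+\infty))$ satisfies, for every $u\in C^\infty_c(\mathbb{R}^n_+)$ and almost every $x,y\in\mathbb{R}^n_+$, \[ |u(x)-u(y)|\le\omega(x,y)\Big(\int_{\mathbb{R}^n_+}|Du(z)|^pz_n^\gamma\,dz\Big)^{1/p}, \] then for all $x,y\in\mathbb{R}^n_+$, $\omega(x,y)\ge C\,\Theta^0_{1-\frac np,\,1-\frac{n+\gamma}{p}}(x,y)$.
   Context: $\mathbb{R}^n_+=\mathbb{R}^{n-1}\times(0,+\infty)$, points written $x=(x',x_n)$. For $\beta,\kappa\in\mathbb{R}$: $\Theta^0_{\beta,\kappa}(x,y)=\frac{|x-y|^\beta}{\min(x_n,y_n)^{-\kappa}\max(x_n,y_n,|x-y|)^\beta}$ if $\kappa<0$, and $\Theta^0_{\beta,\kappa}(x,y)=\frac{\max(x_n,y_n)^\kappa|x-y|^\beta}{\max(x_n,y_n,|x-y|)^\beta}$ if $\kappa\ge0$. *)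

theory Defs
  imports "HOL-Analysis.Analysis"
begin

text \<open>Upper half-space, with the distinguished (last) coordinate given by index k.\<close>
definition halfspace :: "'n::finite \<Rightarrow> (real^'n) set" where
  "halfspace k = {x. x $ k > 0}"

text \<open>Infinitely differentiable real functions on a set S (all iterated
  Frechet derivatives exist and are continuous).\<close>
coinductive smooth_on :: "'a::euclidean_space set \<Rightarrow> ('a \<Rightarrow> real) \<Rightarrow> bool" where
  "continuous_on S f \<Longrightarrow> f differentiable_on S \<Longrightarrow>
   (\<forall>v. smooth_on S (\<lambda>x. frechet_derivative f (at x) v)) \<Longrightarrow> smooth_on S f"

definition Cinf_c :: "'a::euclidean_space set \<Rightarrow> ('a \<Rightarrow> real) set" where
  "Cinf_c S = {u. smooth_on S u \<and> (\<exists>K. compact K \<and> K \<subseteq> S \<and> (\<forall>x\<in>S - K. u x = 0))}"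

definition grad :: "(real^'n \<Rightarrow> real) \<Rightarrow> real^'n \<Rightarrow> real^'n" where
  "grad u z = (\<chi> i. frechet_derivative u (at z) (axis i 1))"

definition Theta0 :: "'n::finite \<Rightarrow> real \<Rightarrow> real \<Rightarrow> real^'n \<Rightarrow> real^'n \<Rightarrow> real" where
  "Theta0 k \<beta> \<kappa> x y =
     (if \<kappa> < 0 then
        dist x y powr \<beta> /
          (min (x $ k) (y $ k) powr (-\<kappa>) * max (max (x $ k) (y $ k)) (dist x y) powr \<beta>)
      else
        max (x $ k) (y $ k) powr \<kappa> * dist x y powr \<beta> /
          max (max (x $ k) (y $ k)) (dist x y) powr \<beta>)"

end

theory Submission
  imports Defs
begin

definition Eb :: "nat \<Rightarrow> real \<Rightarrow> real" where
  "Eb m t = (if t > 0 then exp (-1/t) / t^m else 0)"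

lemma Eb_lim0: "((\<lambda>h. Eb m h / h) \<longlongrightarrow> 0) (at_right 0)"
proof -
  have "((\<lambda>s. s ^ (m+1) / exp s) \<longlongrightarrow> (0::real)) at_top" by (rule tendsto_power_div_exp_0)
  then have "((\<lambda>h. (inverse h) ^ (m+1) / exp (inverse h)) \<longlongrightarrow> (0::real)) (at_right 0)"
    by (rule filterlim_compose[OF _ filterlim_inverse_at_top_right])
  moreover have "eventually (\<lambda>h. (inverse h) ^ (m+1) / exp (inverse h) = Eb m h / h) (at_right (0::real))"
    apply (rule eventually_at_rightI[where b=1])
    by (auto simp: Eb_def exp_minus field_simps power_inverse)
  ultimately show ?thesis by (rule Lim_transform_eventually)
qed

lemma Eb_deriv0: "(Eb m has_real_derivative 0) (at 0)"
proof -
  have "((\<lambda>h. (Eb m h - Eb m 0) / (h - 0)) \<longlongrightarrow> 0) (at 0)"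
  proof (rule filterlim_split_at)
    show "((\<lambda>h. (Eb m h - Eb m 0) / (h - 0)) \<longlongrightarrow> 0) (at_left 0)"
      apply (rule Lim_transform_eventually[where f="\<lambda>_. 0", rotated])
      apply simp
      apply (rule eventually_at_leftI[where a="-1"])
      by (auto simp: Eb_def)
    show "((\<lambda>h. (Eb m h - Eb m 0) / (h - 0)) \<longlongrightarrow> 0) (at_right 0)"
      using Eb_lim0[of m] by (simp add: Eb_def)
  qed
  then show ?thesis by (simp add: has_field_derivative_iff)
qed

lemma Eb_deriv: "(Eb m has_real_derivative (Eb (m+2) t - real m * Eb (m+1) t)) (at t)"
proof (cases "t > 0")
  case True
  have "((\<lambda>t. exp (-1/t) / t^m) has_real_derivative (Eb (m+2) t - real m * Eb (m+1) t)) (at t)"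
    using True
    apply (auto intro!: derivative_eq_intros simp: Eb_def)
    apply (cases m)
    apply (auto simp: field_simps power_Suc)
    done
  then show ?thesis
    apply (rule has_field_derivative_transform_within_open[where S="{0<..}"])
    using True by (auto simp: Eb_def)
next
  case False
  show ?thesis
  proof (cases "t = 0")
    case True then show ?thesis using Eb_deriv0[of m] by (simp add: Eb_def)
  next
    case False
    with \<open>\<not> t > 0\<close> have "t < 0" by simp
    have "((\<lambda>_. 0) has_real_derivative (Eb (m+2) t - real m * Eb (m+1) t)) (at t)"
      using \<open>t<0\<close> by (simp add: Eb_def)
    then show ?thesis
      apply (rule has_field_derivative_transform_within_open[where S="{..<0}"])
      using \<open>t<0\<close> by (auto simp: Eb_def)
  qed
qed


inductive_set Sm :: "('a::real_inner \<Rightarrow> real) set" where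
  Sc: "(\<lambda>_. c) \<in> Sm"
| Sl: "(\<lambda>z. z \<bullet> a) \<in> Sm"
| Sq: "(\<lambda>z. z \<bullet> z) \<in> Sm"
| Sa: "f \<in> Sm \<Longrightarrow> g \<in> Sm \<Longrightarrow> (\<lambda>z. f z + g z) \<in> Sm"
| Sp: "f \<in> Sm \<Longrightarrow> g \<in> Sm \<Longrightarrow> (\<lambda>z. f z * g z) \<in> Sm"
| Se: "f \<in> Sm \<Longrightarrow> (\<lambda>z. Eb m (f z)) \<in> Sm"

lemma Sm_deriv:
  assumes "f \<in> Sm"
  shows "\<exists>D. (\<forall>x. (f has_derivative D x) (at x)) \<and> (\<forall>v. (\<lambda>x. D x v) \<in> Sm)"
  using assms
proof induction
  case (Sc c)
  show ?case
    by (rule exI[where x="\<lambda>x v. 0"]) (auto intro: Sm.Sc)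
next
  case (Sl a)
  show ?case
    apply (rule exI[where x="\<lambda>x v. v \<bullet> a"])
    by (auto intro!: Sm.Sc derivative_eq_intros)
next
  case Sq
  show ?case
    apply (rule exI[where x="\<lambda>x v. x \<bullet> v + v \<bullet> x"])
    apply (auto intro!: derivative_eq_intros)
    subgoal for v using Sm.Sa[OF Sm.Sl[of v] Sm.Sl[of v]] by (simp add: inner_commute)
    done
next
  case (Sa f g)
  then obtain Df Dg where f: "\<forall>x. (f has_derivative Df x) (at x)" "\<forall>v. (\<lambda>x. Df x v) \<in> Sm"
    and g: "\<forall>x. (g has_derivative Dg x) (at x)" "\<forall>v. (\<lambda>x. Dg x v) \<in> Sm" by blast
  show ?case
    apply (rule exI[where x="\<lambda>x v. Df x v + Dg x v"])
    using f g by (auto intro!: derivative_eq_intros Sm.Sa)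
next
  case (Sp f g)
  then obtain Df Dg where f: "\<forall>x. (f has_derivative Df x) (at x)" "\<forall>v. (\<lambda>x. Df x v) \<in> Sm"
    and g: "\<forall>x. (g has_derivative Dg x) (at x)" "\<forall>v. (\<lambda>x. Dg x v) \<in> Sm" by blast
  show ?case
    apply (rule exI[where x="\<lambda>x v. f x * Dg x v + Df x v * g x"])
    using f g Sp.hyps by (auto intro!: derivative_eq_intros Sm.Sa Sm.Sp)
next
  case (Se f m)
  then obtain Df where f: "\<forall>x. (f has_derivative Df x) (at x)" "\<forall>v. (\<lambda>x. Df x v) \<in> Sm" by blast
  have E: "(Eb m has_derivative (\<lambda>h. h * (Eb (m+2) t - real m * Eb (m+1) t))) (at t)" for t
  proof -
    have "(\<lambda>h. h * (Eb (m+2) t - real m * Eb (m+1) t)) = (*) (Eb (m+2) t - real m * Eb (m+1) t)"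
      by (auto simp: fun_eq_iff mult.commute)
    then show ?thesis using Eb_deriv[of m t] by (simp add: has_field_derivative_def)
  qed
  show ?case
  proof (rule exI[where x="\<lambda>x v. (Eb (m+2) (f x) + (- real m) * Eb (m+1) (f x)) * Df x v"], intro conjI allI)
    fix x
    show "((\<lambda>z. Eb m (f z)) has_derivative (\<lambda>v. (Eb (m+2) (f x) + (- real m) * Eb (m+1) (f x)) * Df x v)) (at x)"
      using has_derivative_compose[OF f(1)[rule_format, of x] E]
      by (simp add: o_def mult.commute)
  next
    fix v
    show "(\<lambda>x. (Eb (m+2) (f x) + (- real m) * Eb (m+1) (f x)) * Df x v) \<in> Sm"
      using f(2) Se.hyps by (intro Sm.Sp Sm.Sa Sm.Se Sm.Sc) auto
  qed
qed

lemma Sm_smooth: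
  fixes f :: "'a::euclidean_space \<Rightarrow> real"
  assumes "f \<in> Sm"
  shows "smooth_on S f"
  using assms
proof (coinduction arbitrary: f)
  case smooth_on
  then obtain D where D: "\<forall>x. (f has_derivative D x) (at x)" "\<forall>v. (\<lambda>x. D x v) \<in> Sm"
    using Sm_deriv by blast
  have fd: "frechet_derivative f (at x) = D x" for x
    using frechet_derivative_at[OF D(1)[rule_format, of x]] by simp
  show ?case
    using D
    by (auto simp: fd intro!: continuous_at_imp_continuous_on has_derivative_continuous
        differentiable_at_imp_differentiable_on differentiableI)
qed


lemma Eb_nonneg: "Eb m t \<ge> 0"
  by (auto simp: Eb_def)

lemma Eb_zero: "t \<le> 0 \<Longrightarrow> Eb m t = 0"
  by (auto simp: Eb_def)

lemma Eb2_le: "Eb 2 t \<le> 4"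
proof (cases "t > 0")
  case True
  define s where "s = 1 / t"
  have s: "s > 0" using True by (simp add: s_def)
  have "exp (s/2) \<ge> 1 + s/2" by (rule exp_ge_add_one_self)
  then have "exp (s/2) \<ge> s/2" by linarith
  then have "exp (s/2) * exp (s/2) \<ge> (s/2) * (s/2)" using s by (intro mult_mono) auto
  then have e: "exp s \<ge> s^2/4" by (simp add: exp_add[symmetric] power2_eq_square)
  have "Eb 2 t = s^2 / exp s" using True by (simp add: Eb_def s_def exp_minus field_simps)
  also have "\<dots> \<le> 4" using e by (simp add: field_simps)
  finally show ?thesis .
qed (auto simp: Eb_def)

definition bump :: "real^'n \<Rightarrow> real \<Rightarrow> real^'n \<Rightarrow> real" where
  "bump P r z = Eb 0 (1 - ((z - P) \<bullet> (z - P)) / r^2)"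

lemma bump_Sm: "bump P r \<in> Sm"
proof -
  have "bump P r = (\<lambda>z. Eb 0 ((\<lambda>z. 1 + (-1/r^2) * (z \<bullet> z + ((-2) * (z \<bullet> P) + (P \<bullet> P)))) z))"
    by (auto simp: fun_eq_iff bump_def inner_diff_left inner_diff_right inner_commute field_simps)
  also have "\<dots> \<in> Sm"
    by (intro Sm.intros)
  finally show ?thesis .
qed

lemma bump_deriv:
  assumes r: "r > 0"
  shows "(bump P r has_derivative (\<lambda>v. Eb 2 (1 - ((z - P) \<bullet> (z - P)) / r^2) * (-2/r^2 * ((z - P) \<bullet> v)))) (at z)"
proof -
  let ?g = "\<lambda>z. 1 - ((z - P) \<bullet> (z - P)) / r^2"
  have g: "(?g has_derivative (\<lambda>v. -2/r^2 * ((z - P) \<bullet> v))) (at z)"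
  proof -
    have h: "((\<lambda>z. (z-P)\<bullet>(z-P)) has_derivative (\<lambda>v. 2 * ((z-P)\<bullet>v))) (at z)"
      apply (rule has_derivative_eq_rhs)
       apply (rule has_derivative_inner has_derivative_diff has_derivative_ident has_derivative_const)+
      by (auto simp: fun_eq_iff inner_commute)
    have "((\<lambda>z. 1 - (1/r^2) * ((z-P)\<bullet>(z-P))) has_derivative (\<lambda>v. 0 - (1/r^2) * (2 * ((z-P)\<bullet>v)))) (at z)"
      by (intro has_derivative_diff has_derivative_const has_derivative_mult_right h) 
    moreover have "(\<lambda>z. 1 - (1/r^2) * ((z-P)\<bullet>(z-P))) = ?g" by (auto simp: fun_eq_iff)
    moreover have "(\<lambda>v. 0 - (1/r^2) * (2 * ((z-P)\<bullet>v))) = (\<lambda>v. -2/r^2 * ((z - P) \<bullet> v))" by (auto simp: fun_eq_iff)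
    ultimately show ?thesis by simp
  qed
  have E: "(Eb 0 has_derivative (\<lambda>h. Eb 2 (?g z) * h)) (at (?g z))"
    using Eb_deriv[of 0 "?g z"] by (simp add: has_field_derivative_def numeral_2_eq_2)
  show ?thesis
    using has_derivative_compose[OF g E] by (simp add: o_def bump_def[abs_def])
qed

lemma grad_bump:
  assumes r: "r > 0"
  shows "grad (bump P r) z = (Eb 2 (1 - ((z - P) \<bullet> (z - P)) / r^2) * (-2/r^2)) *\<^sub>R (z - P)"
  unfolding grad_def frechet_derivative_at[OF bump_deriv[OF r], symmetric]
  by (auto simp: vec_eq_iff inner_axis)

lemma norm_grad_bump:
  assumes "r > 0"
  shows "norm (grad (bump P r) z) \<le> (if dist z P < r then 8 / r else 0)"
proof -
  let ?t = "1 - ((z - P) \<bullet> (z - P)) / r^2"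
  have n: "norm (grad (bump P r) z) = Eb 2 ?t * (2/r^2) * norm (z - P)"
    using assms by (simp add: grad_bump Eb_nonneg abs_mult)
  show ?thesis
  proof (cases "dist z P < r")
    case True
    have "Eb 2 ?t * (2/r^2) * norm (z - P) \<le> 4 * (2/r^2) * r"
      using True assms by (intro mult_mono Eb2_le) (auto simp: dist_norm Eb_nonneg)
    also have "\<dots> = 8 / r" using assms by (simp add: power2_eq_square)
    finally show ?thesis using True n by simp
  next
    case False
    then have "norm (z - P) \<ge> r" by (simp add: dist_norm)
    then have "(z - P) \<bullet> (z - P) \<ge> r^2" using assms
      by (metis power2_norm_eq_inner power_mono less_imp_le)
    then have "?t \<le> 0" using assms by (simp add: field_simps)
    then show ?thesis using False n by (simp add: Eb_zero)
  qed
qed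

lemma bump_center: "r \<noteq> 0 \<Longrightarrow> bump P r P = exp (-1)"
  by (simp add: bump_def Eb_def)

lemma bump_out: "r > 0 \<Longrightarrow> dist z P \<ge> r \<Longrightarrow> bump P r z = 0"
proof -
  assume r: "r > 0" and d: "dist z P \<ge> r"
  then have "norm (z - P) \<ge> r" by (simp add: dist_norm)
  then have "(z - P) \<bullet> (z - P) \<ge> r^2" using r
    by (metis power2_norm_eq_inner power_mono less_imp_le)
  then have "1 - ((z - P) \<bullet> (z - P)) / r^2 \<le> 0" using r by (simp add: field_simps)
  then show ?thesis by (simp add: bump_def Eb_zero)
qed


lemma halfspace_cball:
  assumes "P \<in> halfspace k" "r < P $ k"
  shows "cball P r \<subseteq> halfspace k"
proof
  fix z assume "z \<in> cball P r"
  then have "norm (P - z) \<le> r" by (simp add: dist_norm)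
  moreover have "\<bar>(P - z) $ k\<bar> \<le> norm (P - z)" by (rule component_le_norm_cart)
  ultimately have "P $ k - z $ k \<le> r" by simp
  then show "z \<in> halfspace k" using assms by (simp add: halfspace_def)
qed

lemma bump_Cinf:
  assumes "P \<in> halfspace k" "0 < r" "r < P $ k"
  shows "bump P r \<in> Cinf_c (halfspace k)"
  unfolding Cinf_c_def
proof (intro CollectI conjI exI[where x="cball P r"])
  show "smooth_on (halfspace k) (bump P r)" by (rule Sm_smooth[OF bump_Sm])
  show "compact (cball P r)" by simp
  show "cball P r \<subseteq> halfspace k" by (rule halfspace_cball[OF assms(1,3)])
  show "\<forall>x\<in>halfspace k - cball P r. bump P r x = 0"
    using assms(2) by (auto intro!: bump_out simp: dist_commute)
qed

lemma integral_bump_bound: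
  fixes P :: "real^'n" and k :: 'n and \<gamma> :: real
  assumes P: "P \<in> halfspace k" and r: "0 < r" "r \<le> P $ k / 2" and p: "p > 0"
  defines "W \<equiv> (P $ k / 2) powr \<gamma> + (3 * P $ k / 2) powr \<gamma>"
  shows "0 \<le> integral (halfspace k) (\<lambda>z. norm (grad (bump P r) z) powr p * (z $ k) powr \<gamma>)"
    and "integral (halfspace k) (\<lambda>z. norm (grad (bump P r) z) powr p * (z $ k) powr \<gamma>)
           \<le> (8 / r) powr p * W * (unit_ball_vol (real CARD('n)) * r ^ CARD('n))"
proof -
  let ?f = "\<lambda>z. norm (grad (bump P r) z) powr p * (z $ k) powr \<gamma>"
  define M where "M = (8 / r) powr p * W"
  let ?g = "\<lambda>z. if z \<in> cball P r then M else 0"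
  have Pk: "P $ k > 0" using P by (simp add: halfspace_def)
  have sub: "cball P r \<subseteq> halfspace k" using halfspace_cball[OF P] r Pk by simp
  have fnn: "0 \<le> ?f z" for z by simp
  have fle: "?f z \<le> ?g z" if z: "z \<in> halfspace k" for z
  proof (cases "z \<in> cball P r")
    case True
    have "\<bar>(P - z) $ k\<bar> \<le> norm (P - z)" by (rule component_le_norm_cart)
    moreover have "norm (P - z) \<le> r" using True by (simp add: dist_norm)
    ultimately have zk: "P $ k / 2 \<le> z $ k" "z $ k \<le> 3 * P $ k / 2" using r by auto
    have A: "norm (grad (bump P r) z) powr p \<le> (8 / r) powr p"
      using norm_grad_bump[OF r(1), of P z] p r
      by (intro powr_mono2) (auto split: if_splits)
    have B: "(z $ k) powr \<gamma> \<le> W"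
    proof (cases "\<gamma> \<ge> 0")
      case True
      then have "(z $ k) powr \<gamma> \<le> (3 * P $ k / 2) powr \<gamma>"
        using zk Pk by (intro powr_mono2) auto
      then show ?thesis unfolding W_def by (smt (verit) powr_ge_zero)
    next
      case False
      then have "(z $ k) powr \<gamma> \<le> (P $ k / 2) powr \<gamma>"
        using zk Pk by (intro powr_mono2') auto
      then show ?thesis unfolding W_def by (smt (verit) powr_ge_zero)
    qed
    have "?f z \<le> (8 / r) powr p * W"
      using A B by (intro mult_mono) auto
    then show ?thesis using True by (simp add: M_def)
  next
    case False
    then have "dist z P > r" by (simp add: dist_commute)
    then have "norm (grad (bump P r) z) = 0"
      using norm_grad_bump[OF r(1), of P z] by (simp add: not_less[symmetric])
    then show ?thesis using False p by simp
  qed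
  have gint: "(?g has_integral (M * (unit_ball_vol (real CARD('n)) * r ^ CARD('n)))) (halfspace k)"
  proof -
    have cm: "cball P r \<in> lmeasurable" by simp
    have "measure lebesgue (cball P r) = unit_ball_vol (real CARD('n)) * r ^ CARD('n)"
      using content_cball[of r P] r by simp
    then have "((\<lambda>_. 1::real) has_integral (unit_ball_vol (real CARD('n)) * r ^ CARD('n))) (cball P r)"
      using lmeasure_integral[OF cm] integrable_on_const[OF cm, of "1::real"]
      by (simp add: has_integral_iff)
    then have "((\<lambda>_. M * 1) has_integral (M * (unit_ball_vol (real CARD('n)) * r ^ CARD('n)))) (cball P r)"
      by (rule has_integral_mult_right)
    then show ?thesis
      using sub by (subst has_integral_restrict_Int) (simp add: Int_absorb2)
  qed
  show "0 \<le> integral (halfspace k) ?f"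
  proof (cases "?f integrable_on halfspace k")
    case True then show ?thesis by (intro integral_nonneg) auto
  qed (simp add: not_integrable_integral)
  have bnd: "0 \<le> M * (unit_ball_vol (real CARD('n)) * r ^ CARD('n))"
    unfolding M_def W_def using r by (intro mult_nonneg_nonneg) auto
  show "integral (halfspace k) ?f \<le> (8 / r) powr p * W * (unit_ball_vol (real CARD('n)) * r ^ CARD('n))"
  proof (cases "?f integrable_on halfspace k")
    case True
    have "integral (halfspace k) ?f \<le> integral (halfspace k) ?g"
      using True gint fle by (intro integral_le) (auto simp: has_integral_iff)
    also have "\<dots> = M * (unit_ball_vol (real CARD('n)) * r ^ CARD('n))"
      using gint by (simp add: has_integral_iff)
    finally show ?thesis by (simp add: M_def)
  next
    case False
    then show ?thesis using bnd by (simp add: not_integrable_integral M_def)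
  qed
qed

lemma AE_open_ex:
  fixes U :: "'a::euclidean_space set"
  assumes "open U" "x \<in> U" "AE y in lborel. P y"
  shows "\<exists>y\<in>U. P y"
proof (rule ccontr)
  assume "\<not> ?thesis"
  then have nP: "\<And>y. y \<in> U \<Longrightarrow> \<not> P y" by blast
  obtain e where e: "e > 0" "ball x e \<subseteq> U" using assms(1,2) openE by blast
  have "AE y in lborel. y \<notin> ball x e"
    using assms(3) by (rule eventually_mono) (use nP e in auto)
  then have "emeasure lborel (ball x e) = 0"
    by (subst (asm) AE_iff_measurable[where N="ball x e"]) auto
  moreover have "emeasure lborel (ball x e) > 0"
    using e by (simp add: emeasure_ball)
  ultimately show False by simp
qed


lemma AE_pointwise:
  fixes \<omega> :: "'a::euclidean_space \<Rightarrow> 'a \<Rightarrow> real" and u :: "'a \<Rightarrow> real"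
  assumes cont: "continuous_on (H \<times> H) (\<lambda>(x, y). \<omega> x y)" and cu: "continuous_on UNIV u"
    and H: "open H"
    and ae: "AE xy in lborel. fst xy \<in> H \<longrightarrow> snd xy \<in> H \<longrightarrow>
               \<bar>u (fst xy) - u (snd xy)\<bar> \<le> \<omega> (fst xy) (snd xy) * c"
    and x: "x \<in> H" and y: "y \<in> H"
  shows "\<bar>u x - u y\<bar> \<le> \<omega> x y * c"
proof (rule ccontr)
  assume neg: "\<not> ?thesis"
  let ?F = "\<lambda>xy. \<bar>u (fst xy) - u (snd xy)\<bar> - \<omega> (fst xy) (snd xy) * c"
  have c1: "continuous_on (H \<times> H) (\<lambda>xy. \<omega> (fst xy) (snd xy))"
    using cont by (simp add: case_prod_beta')
  have c2: "continuous_on (H \<times> H) (\<lambda>xy. u (fst xy))"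
    by (rule continuous_on_compose2[OF cu continuous_on_fst[OF continuous_on_id]]) auto
  have c3: "continuous_on (H \<times> H) (\<lambda>xy. u (snd xy))"
    by (rule continuous_on_compose2[OF cu continuous_on_snd[OF continuous_on_id]]) auto
  have cF: "continuous_on (H \<times> H) ?F"
    by (intro continuous_intros c1 c2 c3)
  have "open (?F -` {0<..} \<inter> (H \<times> H))"
    using continuous_on_open_vimage[OF open_Times[OF H H], THEN iffD1, OF cF, rule_format, of "{0<..}"] by simp
  then have oU: "open ((H \<times> H) \<inter> ?F -` {0<..})" by (simp add: Int_commute)
  have "(x, y) \<in> (H \<times> H) \<inter> ?F -` {0<..}" using x y neg by auto
  from AE_open_ex[OF oU this ae] show False by auto
qed

lemma bump_lower:
  fixes P Q :: "real^'n" and k :: 'n and \<gamma> p :: real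
  assumes P: "P \<in> halfspace k" and Q: "Q \<in> halfspace k" and PQ: "P \<noteq> Q" and p: "p > 0"
  defines "r \<equiv> min (dist P Q) (P $ k) / 2"
  defines "I \<equiv> integral (halfspace k) (\<lambda>z. norm (grad (bump P r) z) powr p * (z $ k) powr \<gamma>)"
  defines "Bd \<equiv> (8 / r) powr p * ((P $ k / 2) powr \<gamma> + (3 * P $ k / 2) powr \<gamma>) *
                 (unit_ball_vol (real CARD('n)) * r ^ CARD('n))"
  assumes h: "\<bar>bump P r P - bump P r Q\<bar> \<le> w * I powr (1 / p)"
  shows "w \<ge> exp (-1) / Bd powr (1 / p)"
proof -
  have Pk: "P $ k > 0" using P by (simp add: halfspace_def)
  have d: "dist P Q > 0" using PQ by simp
  have r: "r > 0" "r \<le> P $ k / 2" "r < dist Q P" using Pk d unfolding r_def by (simp_all add: dist_commute min_def)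
  have I0: "0 \<le> I" and IB: "I \<le> Bd"
    using integral_bump_bound[OF P r(1,2) p, of \<gamma>] by (simp_all add: I_def Bd_def)
  have "\<bar>bump P r P - bump P r Q\<bar> = exp (-1)"
    using r bump_center[of r P] bump_out[of r Q P] by simp
  with h have e: "exp (-1) \<le> w * I powr (1 / p)" by simp
  have Ipos: "I > 0"
  proof (rule ccontr)
    assume "\<not> I > 0" with I0 have "I = 0" by simp
    with e show False by simp
  qed
  have w0: "w > 0"
  proof (rule ccontr)
    assume "\<not> w > 0"
    then have "w * I powr (1/p) \<le> 0" by (simp add: mult_nonpos_nonneg)
    with e show False by (smt (verit) exp_gt_zero)
  qed
  have "I powr (1/p) \<le> Bd powr (1/p)" using I0 IB p by (intro powr_mono2) auto
  moreover have "I powr (1/p) > 0" using Ipos by simp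
  moreover have "Bd powr (1/p) > 0" using Ipos IB by simp
  ultimately have "exp (-1) / Bd powr (1 / p) \<le> exp (-1) / I powr (1/p)"
    by (intro divide_left_mono) auto
  also have "\<dots> \<le> w" using e Ipos by (simp add: divide_le_eq)
  finally show ?thesis .
qed


lemma aux_field:
  fixes A B X e :: real
  assumes "A > 0" "B > 0" "X > 0"
  shows "e / (8 * inverse A * B * X) = e / (8 * X) * A * inverse B"
  using assms by (simp add: field_simps)

lemma Bd_alg:
  fixes r Pk p \<gamma> V :: real and n :: nat
  assumes r: "r > 0" and Pk: "Pk > 0" and p: "p > 0" and V: "V > 0"
  defines "c \<equiv> (1/2) powr \<gamma> + (3/2) powr \<gamma>"
  shows "exp (-1) / ((8 / r) powr p * ((Pk / 2) powr \<gamma> + (3 * Pk / 2) powr \<gamma>) * (V * r ^ n)) powr (1 / p)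
     = exp (-1) / (8 * (V * c) powr (1/p)) * r powr (1 - real n / p) * Pk powr (- \<gamma> / p)"
proof -
  have c: "c > 0" unfolding c_def by (simp add: add_pos_pos)
  have W: "(Pk / 2) powr \<gamma> + (3 * Pk / 2) powr \<gamma> = Pk powr \<gamma> * c"
  proof -
    have "3 * Pk / 2 = Pk * (3/2)" "Pk / 2 = Pk * (1/2)" by simp_all
    then show ?thesis unfolding c_def using Pk by (simp only: powr_mult) (simp add: distrib_left)
  qed
  have "(8 / r) powr p * ((Pk / 2) powr \<gamma> + (3 * Pk / 2) powr \<gamma>) * (V * r ^ n)
      = (8 / r) powr p * r powr (real n) * Pk powr \<gamma> * (V * c)"
    using r by (simp add: W powr_realpow)
  also have "(\<dots>) powr (1/p) = (8 / r) * r powr (real n / p) * Pk powr (\<gamma> / p) * (V * c) powr (1/p)"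
    using r Pk p V c by (simp add: powr_mult powr_powr)
  also have "(8 / r) * r powr (real n / p) = 8 * r powr (- (1 - real n / p))"
  proof -
    have "- (1 - real n / p) = real n / p - 1" by simp
    then have "r powr (- (1 - real n / p)) = r powr (real n / p) / r"
      using r by (simp add: powr_diff)
    then show ?thesis by simp
  qed
  finally have eq: "((8 / r) powr p * ((Pk / 2) powr \<gamma> + (3 * Pk / 2) powr \<gamma>) * (V * r ^ n)) powr (1 / p)
      = 8 * r powr (- (1 - real n / p)) * Pk powr (\<gamma> / p) * (V * c) powr (1/p)" .
  have e1: "r powr (- (1 - real n / p)) = inverse (r powr (1 - real n / p))"
    by (rule powr_minus)
  have e2: "Pk powr (- \<gamma> / p) = inverse (Pk powr (\<gamma> / p))"
    using powr_minus[of Pk "\<gamma>/p"] by simp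
  have pos: "r powr (1 - real n / p) > 0" "Pk powr (\<gamma> / p) > 0" "(V * c) powr (1/p) > 0"
    using r Pk V c by auto
  show ?thesis
    unfolding eq e1 e2 using aux_field[OF pos] by simp
qed


lemma theta_le1:
  fixes a b d \<beta> g :: real
  assumes a: "a > 0" and b: "b > 0" and d: "d > 0" and \<beta>: "\<beta> > 0"
  shows "max a b powr (\<beta> - g) * d powr \<beta> / max (max a b) d powr \<beta> \<le> min d (max a b) powr \<beta> * max a b powr (-g)"
proof -
  define A where "A = max a b"
  have A: "A > 0" using a b by (simp add: A_def)
  have s: "A powr (\<beta> - g) = A powr \<beta> * A powr (-g)"
    using powr_add[of A \<beta> "-g"] by simp
  have pos: "A powr \<beta> > 0" "d powr \<beta> > 0" "A powr (-g) > 0" using A d by auto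
  show ?thesis
  proof (cases "d \<le> A")
    case True
    then have "max A d = A" "min d A = d" by auto
    then show ?thesis unfolding A_def[symmetric] s using pos by (simp add: field_simps)
  next
    case False
    then have "max A d = d" "min d A = A" by auto
    then show ?thesis unfolding A_def[symmetric] s using pos by (simp add: field_simps)
  qed
qed

lemma theta_le2:
  fixes a b d \<beta> g :: real
  assumes a: "a > 0" and b: "b > 0" and d: "d > 0" and \<beta>: "\<beta> > 0"
  shows "d powr \<beta> / (min a b powr (- (\<beta> - g)) * max (max a b) d powr \<beta>) \<le> min d (min a b) powr \<beta> * min a b powr (-g)"
proof -
  define B where "B = min a b"
  define M where "M = max (max a b) d"
  have B: "B > 0" using a b by (simp add: B_def)
  have BM: "B \<le> M" "d \<le> M" by (auto simp: B_def M_def)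
  have M: "M > 0" using d BM by simp
  have s: "B powr (- (\<beta> - g)) = inverse (B powr \<beta> * B powr (-g))"
    using powr_add[of B \<beta> "-g"] powr_minus[of B "\<beta> - g"] by simp
  have pos: "B powr \<beta> > 0" "d powr \<beta> > 0" "B powr (-g) > 0" "M powr \<beta> > 0" using B d M by auto
  have key: "d powr \<beta> * B powr \<beta> \<le> min d B powr \<beta> * M powr \<beta>"
  proof (cases "d \<le> B")
    case True
    have "B powr \<beta> \<le> M powr \<beta>" using BM B \<beta> by (intro powr_mono2) auto
    then show ?thesis using True pos by (simp add: min_def)
  next
    case False
    have "d powr \<beta> \<le> M powr \<beta>" using BM d \<beta> by (intro powr_mono2) auto
    then show ?thesis using False pos by (simp add: min_def mult.commute)
  qed
  have "d powr \<beta> / (inverse (B powr \<beta> * B powr (-g)) * M powr \<beta>) = (d powr \<beta> * B powr \<beta>) / M powr \<beta> * B powr (-g)"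
    using pos by (simp add: field_simps)
  also have "\<dots> \<le> (min d B powr \<beta> * M powr \<beta>) / M powr \<beta> * B powr (-g)"
    using key pos by (intro mult_right_mono divide_right_mono) auto
  also have "\<dots> = min d B powr \<beta> * B powr (-g)" using pos by simp
  finally show ?thesis unfolding B_def[symmetric] M_def[symmetric] s .
qed


lemma lower_P:
  fixes k :: "'n::finite" and \<gamma> p :: real and \<omega> :: "real^'n \<Rightarrow> real^'n \<Rightarrow> real"
  assumes p: "p > 0"
    and cont: "continuous_on (halfspace k \<times> halfspace k) (\<lambda>(x, y). \<omega> x y)"
    and hyp: "\<forall>u\<in>Cinf_c (halfspace k).
          AE xy in lborel. fst xy \<in> halfspace k \<longrightarrow> snd xy \<in> halfspace k \<longrightarrow>
            \<bar>u (fst xy) - u (snd xy)\<bar>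
              \<le> \<omega> (fst xy) (snd xy) *
                 (integral (halfspace k) (\<lambda>z. norm (grad u z) powr p * (z $ k) powr \<gamma>)) powr (1 / p)"
    and P: "P \<in> halfspace k" and Q: "Q \<in> halfspace k" and PQ: "P \<noteq> Q"
  defines "C \<equiv> exp (-1) / (8 * (unit_ball_vol (real CARD('n)) * ((1/2) powr \<gamma> + (3/2) powr \<gamma>)) powr (1/p))
                  / 2 powr (1 - real CARD('n) / p)"
  shows "\<omega> P Q \<ge> C * (min (dist P Q) (P $ k) powr (1 - real CARD('n) / p) * (P $ k) powr (- (\<gamma> / p)))"
    and "\<omega> Q P \<ge> C * (min (dist P Q) (P $ k) powr (1 - real CARD('n) / p) * (P $ k) powr (- (\<gamma> / p)))"
proof -
  define r where "r = min (dist P Q) (P $ k) / 2"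
  define u where "u = bump P r"
  define I where "I = integral (halfspace k) (\<lambda>z. norm (grad u z) powr p * (z $ k) powr \<gamma>)"
  define Bd where "Bd = (8 / r) powr p * ((P $ k / 2) powr \<gamma> + (3 * P $ k / 2) powr \<gamma>) *
                 (unit_ball_vol (real CARD('n)) * r ^ CARD('n))"
  have Pk: "P $ k > 0" using P by (simp add: halfspace_def)
  have d: "dist P Q > 0" using PQ by simp
  have r: "r > 0" "r < P $ k" using Pk d unfolding r_def by (simp_all add: min_def)
  have uC: "u \<in> Cinf_c (halfspace k)" unfolding u_def by (rule bump_Cinf[OF P r])
  have cu: "continuous_on UNIV u"
    unfolding u_def using bump_deriv[OF r(1), of P]
    by (intro continuous_at_imp_continuous_on ballI) (blast intro: has_derivative_continuous)
  have oH: "open (halfspace k)"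
    unfolding halfspace_def by (intro open_Collect_less continuous_intros)
  have ae: "AE xy in lborel. fst xy \<in> halfspace k \<longrightarrow> snd xy \<in> halfspace k \<longrightarrow>
               \<bar>u (fst xy) - u (snd xy)\<bar> \<le> \<omega> (fst xy) (snd xy) * I powr (1 / p)"
    using hyp uC unfolding I_def by blast
  have h1: "\<bar>u P - u Q\<bar> \<le> \<omega> P Q * I powr (1 / p)"
    by (rule AE_pointwise[OF cont cu oH ae P Q])
  have h2: "\<bar>u P - u Q\<bar> \<le> \<omega> Q P * I powr (1 / p)"
    using AE_pointwise[OF cont cu oH ae Q P] by (simp add: abs_minus_commute)
  have V: "unit_ball_vol (real CARD('n)) > 0" by simp
  have eqB: "exp (-1) / Bd powr (1 / p) = C * (min (dist P Q) (P $ k) powr (1 - real CARD('n) / p) * (P $ k) powr (- (\<gamma> / p)))"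
  proof -
    have "exp (-1) / Bd powr (1 / p) = exp (-1) / (8 * (unit_ball_vol (real CARD('n)) * ((1/2) powr \<gamma> + (3/2) powr \<gamma>)) powr (1/p))
        * r powr (1 - real CARD('n) / p) * (P $ k) powr (- \<gamma> / p)"
      unfolding Bd_def by (rule Bd_alg[OF r(1) Pk p V])
    moreover have "r powr (1 - real CARD('n) / p) = min (dist P Q) (P $ k) powr (1 - real CARD('n) / p) / 2 powr (1 - real CARD('n) / p)"
      unfolding r_def using d Pk by (simp add: powr_divide)
    ultimately show ?thesis unfolding C_def by simp
  qed
  show "\<omega> P Q \<ge> C * (min (dist P Q) (P $ k) powr (1 - real CARD('n) / p) * (P $ k) powr (- (\<gamma> / p)))"
    using bump_lower[OF P Q PQ p, where \<gamma>=\<gamma> and w="\<omega> P Q"] h1 eqB unfolding u_def I_def Bd_def r_def by simp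
  show "\<omega> Q P \<ge> C * (min (dist P Q) (P $ k) powr (1 - real CARD('n) / p) * (P $ k) powr (- (\<gamma> / p)))"
    using bump_lower[OF P Q PQ p, where \<gamma>=\<gamma> and w="\<omega> Q P"] h2 eqB unfolding u_def I_def Bd_def r_def by simp
qed


theorem theorem1p5:
  fixes k :: "'n::finite" and \<gamma> p :: real
  assumes "CARD('n) \<ge> 2" and "real CARD('n) < p"
  shows "\<exists>C>0. \<forall>\<omega> :: real^'n \<Rightarrow> real^'n \<Rightarrow> real.
     continuous_on (halfspace k \<times> halfspace k) (\<lambda>(x, y). \<omega> x y)
     \<and> (\<forall>x\<in>halfspace k. \<forall>y\<in>halfspace k. \<omega> x y \<ge> 0)
     \<and> (\<forall>u\<in>Cinf_c (halfspace k).
          AE xy in lborel. fst xy \<in> halfspace k \<longrightarrow> snd xy \<in> halfspace k \<longrightarrow>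
            \<bar>u (fst xy) - u (snd xy)\<bar>
              \<le> \<omega> (fst xy) (snd xy) *
                 (integral (halfspace k) (\<lambda>z. norm (grad u z) powr p * (z $ k) powr \<gamma>)) powr (1 / p))
     \<longrightarrow> (\<forall>x\<in>halfspace k. \<forall>y\<in>halfspace k.
            \<omega> x y \<ge> C * Theta0 k (1 - real CARD('n) / p) (1 - (real CARD('n) + \<gamma>) / p) x y)"
proof -
  have p: "p > 0" using assms by linarith
  define \<beta> where "\<beta> = 1 - real CARD('n) / p"
  have \<beta>: "\<beta> > 0" using assms p by (simp add: \<beta>_def field_simps)
  have \<kappa>: "1 - (real CARD('n) + \<gamma>) / p = \<beta> - \<gamma> / p"
    by (simp add: \<beta>_def add_divide_distrib)
  define C where "C \<equiv> exp (-1) / (8 * (unit_ball_vol (real CARD('n)) * ((1/2) powr \<gamma> + (3/2) powr \<gamma>)) powr (1/p))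
                  / 2 powr (1 - real CARD('n) / p)"
  have "unit_ball_vol (real CARD('n)) * ((1/2) powr \<gamma> + (3/2) powr \<gamma>) > 0"
    by (intro mult_pos_pos add_pos_pos) auto
  then have Cpos: "C > 0" unfolding C_def by (intro divide_pos_pos mult_pos_pos) auto
  show ?thesis
  proof (intro exI[where x=C] conjI allI impI ballI Cpos)
    fix \<omega> :: "real^'n \<Rightarrow> real^'n \<Rightarrow> real" and x y
    assume H: "continuous_on (halfspace k \<times> halfspace k) (\<lambda>(x, y). \<omega> x y)
     \<and> (\<forall>x\<in>halfspace k. \<forall>y\<in>halfspace k. \<omega> x y \<ge> 0)
     \<and> (\<forall>u\<in>Cinf_c (halfspace k).
          AE xy in lborel. fst xy \<in> halfspace k \<longrightarrow> snd xy \<in> halfspace k \<longrightarrow>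
            \<bar>u (fst xy) - u (snd xy)\<bar>
              \<le> \<omega> (fst xy) (snd xy) *
                 (integral (halfspace k) (\<lambda>z. norm (grad u z) powr p * (z $ k) powr \<gamma>)) powr (1 / p))"
      and x: "x \<in> halfspace k" and y: "y \<in> halfspace k"
    note L = lower_P[OF p conjunct1[OF H] conjunct2[OF conjunct2[OF H]], folded C_def \<beta>_def]
    have a: "x $ k > 0" and b: "y $ k > 0" using x y by (auto simp: halfspace_def)
    show "\<omega> x y \<ge> C * Theta0 k (1 - real CARD('n) / p) (1 - (real CARD('n) + \<gamma>) / p) x y"
    proof (cases "x = y")
      case True
      then have "Theta0 k (1 - real CARD('n) / p) (1 - (real CARD('n) + \<gamma>) / p) x y = 0"
        by (simp add: Theta0_def)
      then show ?thesis using H x y by simp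
    next
      case False
      have d: "dist x y > 0" using False by simp
      have LT: "Theta0 k (1 - real CARD('n) / p) (1 - (real CARD('n) + \<gamma>) / p) x y
           \<le> min (dist x y) (x $ k) powr \<beta> * (x $ k) powr (- (\<gamma> / p))
           \<or> Theta0 k (1 - real CARD('n) / p) (1 - (real CARD('n) + \<gamma>) / p) x y
           \<le> min (dist y x) (y $ k) powr \<beta> * (y $ k) powr (- (\<gamma> / p))"
      proof (cases "\<beta> - \<gamma> / p < 0")
        case True
        have "Theta0 k (1 - real CARD('n) / p) (1 - (real CARD('n) + \<gamma>) / p) x y
           \<le> min (dist x y) (min (x $ k) (y $ k)) powr \<beta> * min (x $ k) (y $ k) powr (- (\<gamma> / p))"
          using True theta_le2[OF a b d \<beta>, of "\<gamma> / p"]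
          unfolding Theta0_def \<kappa> \<beta>_def[symmetric] by simp
        then show ?thesis by (cases "x $ k \<le> y $ k") (auto simp: min_def dist_commute)
      next
        case False
        have "Theta0 k (1 - real CARD('n) / p) (1 - (real CARD('n) + \<gamma>) / p) x y
           \<le> min (dist x y) (max (x $ k) (y $ k)) powr \<beta> * max (x $ k) (y $ k) powr (- (\<gamma> / p))"
          using False theta_le1[OF a b d \<beta>, of "\<gamma> / p"]
          unfolding Theta0_def \<kappa> \<beta>_def[symmetric] by simp
        then show ?thesis by (cases "x $ k \<le> y $ k") (auto simp: max_def dist_commute)
      qed
      then show ?thesis
      proof
        assume T: "Theta0 k (1 - real CARD('n) / p) (1 - (real CARD('n) + \<gamma>) / p) x y
           \<le> min (dist x y) (x $ k) powr \<beta> * (x $ k) powr (- (\<gamma> / p))"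
        have "C * Theta0 k (1 - real CARD('n) / p) (1 - (real CARD('n) + \<gamma>) / p) x y
            \<le> C * (min (dist x y) (x $ k) powr \<beta> * (x $ k) powr (- (\<gamma> / p)))"
          using T Cpos by simp
        also have "\<dots> \<le> \<omega> x y" using L(1)[OF x y False] .
        finally show ?thesis .
      next
        assume T: "Theta0 k (1 - real CARD('n) / p) (1 - (real CARD('n) + \<gamma>) / p) x y
           \<le> min (dist y x) (y $ k) powr \<beta> * (y $ k) powr (- (\<gamma> / p))"
        have "C * Theta0 k (1 - real CARD('n) / p) (1 - (real CARD('n) + \<gamma>) / p) x y
            \<le> C * (min (dist y x) (y $ k) powr \<beta> * (y $ k) powr (- (\<gamma> / p)))"
          using T Cpos by simp
        also have "\<dots> \<le> \<omega> x y" using L(2)[OF y x] False by simp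
        finally show ?thesis .
      qed
    qed
  qed
qed

end
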